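(* Let $(x^k)$ be generated by the augmented Lagrangian method described below, where each step satisfies the inexactness assumption described below with $\varepsilon_k\downarrow0$, and let $\bar x$ be a limit point of $(x^k)$. Assume that one of the following holds: (a) $\bar x$ is feasible for the GNEP and GNEP-CPLD holds in $\bar x$; (b) GNEP-EMFCQ holds in $\bar x$. Then $\bar x$ is a KKT point of the GNEP.
   Context: GNEP: $N$ players, variables $x=(x^1,\ldots,x^N)\in\mathbb{R}^n$, $x^\nu\in\mathbb{R}^{n_\nu}$. Player $\nu$ solves $\min_{x^\nu}\theta_\nu(x)$ s.t. $c^\nu(x):=(g^\nu(x),h^\nu(x))\le0$, with continuously differentiable $\theta_\nu:\mathbb{R}^n\to\mathbb{R}$, $g^\nu:\mathbb{R}^n\to\mathbb{R}^{m_\nu}$, $h^\nu:\mathbb{R}^n\to\mathbb{R}^{p_\nu}$ ($p_\nu=0$ allowed); $m=\sum m_\nu$, $p=\sum p_\nu$. Notation: $v_+=\max\{0,v\}$ componentwise; $\nabla f$ = transposed Jacobian, $\nabla_{x^\nu}f$ its rows for $x^\nu$; $\min$ componentwise; Euclidean norms. Vectors in $\mathbb{R}^m$ (resp. $\mathbb{R}^p$) are split into player blocks. KKT point of the GNEP: $x$ such that for every $\nu$ there are multipliers $\lambda^\nu\in\mathbb{R}^{m_\nu+p_\nu}$ with $\nabla_{x^\nu}\theta_\nu(x)+\nabla_{x^\nu}c^\nu(x)\lambda^\nu=0$ and $\min\{-c^\nu(x),\lambda^\nu\}=0$. Constraint qualifications (with respect to $c^\nu$): vectors are positively linearly dependent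 if a nontrivial nonnegative combination vanishes. CPLD$_\nu$ at $x$ with $c^\nu(x)\le0$: whenever $\nabla_{x^\nu}c_i^\nu(x)$, $i\in I$, are positively linearly dependent for some $I\subset\{i:c_i^\nu(x)=0\}$, the vectors $\nabla_{x^\nu}c_i^\nu(y)$, $i\in I$, are linearly dependent for all $y$ in a neighbourhood of $x$; GNEP-CPLD at $x$ means CPLD$_\nu$ at $x$ for all $\nu$. GNEP-EMFCQ at $x$: for every $\nu$ there is $d^\nu$ with $\nabla_{x^\nu}c_i^\nu(x)^Td^\nu<0$ for every $i$ with $c_i^\nu(x)\ge0$. Augmented Lagrangian of player $\nu$: $L_a^\nu(x,u;\rho)=\theta_\nu(x)+\frac{\rho}{2}\|(g^\nu(x)+u/\rho)_+\|^2$. Method: choose $x^0\in\mathbb{R}^n,\lambda^0\in\mathbb{R}^m,\mu^0\in\mathbb{R}^p$, an initial $u^0\in\mathbb{R}^m$, $u^{\max}\ge0$, and for each $\nu$: $\tau_\nu\in(0,1)$, $\gamma_\nu>1$, $\rho_{\nu,0}>0$. For $k=0,1,2,\dots$ (the method is assumed to run forever): (1) compute $(x^{k+1},\mu^{k+1})\in\mathbb{R}^{n+p}$ satisfying the inexactness assumption; (2) $\lambda^{\nu,k+1}=(u^{\nu,k}+\rho_{\nu,k}g^\nu(x^{k+1}))_+$; (3) for each $\nu$: if $\|\min\{-g^\nu(x^{k+1}),\lambda^{\nu,k+1}\}\|\le\tau_\nu\|\min\{-g^\nu(x^k),\lambda^{\nu,k}\}\|$ then $\rho_{\nu,k+1}=\rho_{\nu,k}$,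 else $\rho_{\nu,k+1}=\gamma_\nu\rho_{\nu,k}$; (4) $u^{k+1}=\min\{\lambda^{k+1},u^{\max}\}$ componentwise. Inexactness assumption: for all $k,\nu$, $\|\nabla_{x^\nu}L_a^\nu(x^{k+1},u^{\nu,k};\rho_{\nu,k})+\nabla_{x^\nu}h^\nu(x^{k+1})\mu^{\nu,k+1}\|\le\varepsilon_k$ and $\|\min\{-h^\nu(x^{k+1}),\mu^{\nu,k+1}\}\|\le\varepsilon_k'$, with $(\varepsilon_k)\subset[0,\infty)$ bounded and $\varepsilon'_k\to0$. *)

theory Defs
  imports "HOL-Analysis.Analysis"
begin

text \<open>Variables x live in real^'n; the finite type 'p indexes the players;
  blk j is the player owning coordinate j, so the blocks x^\<nu> are
  {j. blk j = \<nu>}. Constraint vectors of player \<nu> are functions nat => real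
  with valid indices i < m \<nu> (for g) and i < p \<nu> (for h).\<close>

definition pd :: "(real^'n \<Rightarrow> real) \<Rightarrow> real^'n \<Rightarrow> 'n \<Rightarrow> real" where
  "pd f x j = frechet_derivative f (at x) (axis j 1)"

definition C1 :: "(real^'n \<Rightarrow> real) \<Rightarrow> bool" where
  "C1 f \<longleftrightarrow> (\<forall>x. f differentiable (at x)) \<and> (\<forall>j. continuous_on UNIV (\<lambda>x. pd f x j))"

definition vnorm :: "'a set \<Rightarrow> ('a \<Rightarrow> real) \<Rightarrow> real" where
  "vnorm A v = sqrt (\<Sum>i\<in>A. (v i)\<^sup>2)"

definition pos :: "real \<Rightarrow> real" where "pos t = max 0 t"

definition cc :: "(real^'n \<Rightarrow> nat \<Rightarrow> real) \<Rightarrow> (real^'n \<Rightarrow> nat \<Rightarrow> real) \<Rightarrow> nat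
    \<Rightarrow> real^'n \<Rightarrow> nat \<Rightarrow> real" where
  "cc g h m x i = (if i < m then g x i else h x (i - m))"

definition La :: "(real^'n \<Rightarrow> real) \<Rightarrow> (real^'n \<Rightarrow> nat \<Rightarrow> real) \<Rightarrow> nat
    \<Rightarrow> real^'n \<Rightarrow> (nat \<Rightarrow> real) \<Rightarrow> real \<Rightarrow> real" where
  "La \<theta> g m x u \<rho> = \<theta> x + \<rho> / 2 * (vnorm {..<m} (\<lambda>i. pos (g x i + u i / \<rho>)))\<^sup>2"

definition pos_lin_dep :: "'n set \<Rightarrow> (nat \<Rightarrow> real^'n \<Rightarrow> real) \<Rightarrow> nat set \<Rightarrow> real^'n \<Rightarrow> bool" where
  "pos_lin_dep B F I y \<longleftrightarrow> (\<exists>a. (\<forall>i\<in>I. a i \<ge> 0) \<and> (\<exists>i\<in>I. a i \<noteq> 0) \<and>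
      (\<forall>j\<in>B. (\<Sum>i\<in>I. a i * pd (F i) y j) = 0))"

definition lin_dep :: "'n set \<Rightarrow> (nat \<Rightarrow> real^'n \<Rightarrow> real) \<Rightarrow> nat set \<Rightarrow> real^'n \<Rightarrow> bool" where
  "lin_dep B F I y \<longleftrightarrow> (\<exists>a. (\<exists>i\<in>I. a i \<noteq> 0) \<and>
      (\<forall>j\<in>B. (\<Sum>i\<in>I. a i * pd (F i) y j) = 0))"

text \<open>CPLD for a constraint system F with q components, w.r.t. block B, at x
  (x assumed to satisfy F \<le> 0 where used).\<close>
definition CPLD :: "'n set \<Rightarrow> (nat \<Rightarrow> real^'n \<Rightarrow> real) \<Rightarrow> nat \<Rightarrow> real^'n \<Rightarrow> bool" where
  "CPLD B F q x \<longleftrightarrow> (\<forall>I. I \<subseteq> {i. i < q \<and> F i x = 0} \<longrightarrow> pos_lin_dep B F I x \<longrightarrow>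
      (\<exists>S. open S \<and> x \<in> S \<and> (\<forall>y\<in>S. lin_dep B F I y)))"

end

theory Submission
  imports Defs
begin


lemma vnorm_ge: "finite A \<Longrightarrow> i \<in> A \<Longrightarrow> \<bar>v i\<bar> \<le> vnorm A v"
proof -
  assume "finite A" "i \<in> A"
  then have "(v i)\<^sup>2 \<le> (\<Sum>i\<in>A. (v i)\<^sup>2)"
    by (intro member_le_sum) auto
  then have "sqrt ((v i)\<^sup>2) \<le> sqrt (\<Sum>i\<in>A. (v i)\<^sup>2)" by (rule real_sqrt_le_mono)
  then show ?thesis by (simp add: vnorm_def)
qed

lemma vnorm_sq: "finite A \<Longrightarrow> (vnorm A v)\<^sup>2 = (\<Sum>i\<in>A. (v i)\<^sup>2)"
  unfolding vnorm_def by (simp add: sum_nonneg)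

lemma swap_eps:
  assumes "finite A" "\<forall>e>0. \<exists>i\<in>A. Q i e" "\<forall>i e e'. Q i e \<longrightarrow> e \<le> e' \<longrightarrow> Q i e'"
  shows "\<exists>i\<in>A. \<forall>e>0. Q i (e::real)"
proof (rule ccontr)
  assume "\<not> ?thesis"
  then have "\<forall>i\<in>A. \<exists>e>0. \<not> Q i e" by auto
  then obtain E where E: "\<forall>i\<in>A. E i > 0 \<and> \<not> Q i (E i)" by metis
  from assms(2) obtain i0 where "i0 \<in> A" using zero_less_one by blast
  then have ne: "A \<noteq> {}" by auto
  define e where "e = Min (E ` A)"
  have "e > 0" unfolding e_def using E assms(1) ne by auto
  then obtain i where i: "i \<in> A" "Q i e" using assms(2) by blast
  have "e \<le> E i" unfolding e_def using assms(1) i by auto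
  then have "Q i (E i)" using assms(3) i by blast
  then show False using E i by auto
qed

lemma BW_multi:
  fixes f :: "nat \<Rightarrow> 'a \<Rightarrow> real"
  shows "finite I \<Longrightarrow> (\<forall>i\<in>I. bounded (range (\<lambda>k. f k i))) \<Longrightarrow>
    \<exists>r. strict_mono r \<and> (\<forall>i\<in>I. convergent (\<lambda>k. f (r k) i))"
proof (induction I rule: finite_induct)
  case empty
  show ?case by (auto intro!: exI[of _ id] simp: strict_mono_def)
next
  case (insert a I)
  then obtain r where r: "strict_mono r" "\<forall>i\<in>I. convergent (\<lambda>k. f (r k) i)" by auto
  have "bounded (range (\<lambda>k. f (r k) a))"
  proof (rule bounded_subset)
    show "bounded (range (\<lambda>k. f k a))" using insert.prems by auto
  qed auto
  then obtain l r2 where r2: "strict_mono r2" "((\<lambda>k. f (r k) a) \<circ> r2) \<longlonglongrightarrow> l"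
    using bounded_imp_convergent_subsequence by blast
  show ?case
  proof (intro exI conjI ballI)
    show "strict_mono (r \<circ> r2)" using r r2 by (simp add: strict_mono_o)
    fix i assume "i \<in> insert a I"
    then show "convergent (\<lambda>k. f ((r \<circ> r2) k) i)"
    proof
      assume "i = a" then show ?thesis using r2 by (auto simp: convergent_def o_def)
    next
      assume "i \<in> I"
      then obtain L where "(\<lambda>k. f (r k) i) \<longlonglongrightarrow> L" using r by (auto simp: convergent_def)
      from LIMSEQ_subseq_LIMSEQ[OF this r2(1)] show ?thesis by (auto simp: convergent_def o_def)
    qed
  qed
qed

lemma pos_sq_deriv: "((\<lambda>t. (pos t)\<^sup>2) has_real_derivative 2 * pos t) (at t)"
proof (cases "t = 0")
  case True
  have "((\<lambda>h. ((pos h)\<^sup>2 - (pos 0)\<^sup>2) / h) \<longlongrightarrow> 0) (at 0)"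
  proof (rule tendsto_sandwich[of "\<lambda>h. - \<bar>h\<bar>" _ _ "\<lambda>h. \<bar>h\<bar>"])
    show "\<forall>\<^sub>F h in at 0. - \<bar>h\<bar> \<le> ((pos h)\<^sup>2 - (pos 0)\<^sup>2) / h"
      by (rule always_eventually) (auto simp: pos_def max_def power2_eq_square)
    show "\<forall>\<^sub>F h in at 0. ((pos h)\<^sup>2 - (pos 0)\<^sup>2) / h \<le> \<bar>h\<bar>"
      by (rule always_eventually) (auto simp: pos_def max_def power2_eq_square)
    show "((\<lambda>h. - \<bar>h\<bar>) \<longlongrightarrow> 0) (at (0::real))"
      by (auto intro!: tendsto_eq_intros)
    show "((\<lambda>h. \<bar>h\<bar>) \<longlongrightarrow> 0) (at (0::real))"
      by (auto intro!: tendsto_eq_intros)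
  qed
  then show ?thesis using True
    by (simp add: DERIV_def pos_def)
next
  case False
  show ?thesis
  proof (cases "t > 0")
    case True
    have "((\<lambda>t. t\<^sup>2) has_real_derivative 2 * t) (at t)"
      by (auto intro!: derivative_eq_intros)
    then have "((\<lambda>t. (pos t)\<^sup>2) has_real_derivative 2 * t) (at t)"
      by (rule has_field_derivative_transform_within_open[where S="{0<..}"])
         (use True in \<open>auto simp: pos_def\<close>)
    then show ?thesis using True by (simp add: pos_def)
  next
    case f2: False
    then have "t < 0" using False by auto
    have "((\<lambda>t. 0) has_real_derivative 0) (at t)"
      by (auto intro!: derivative_eq_intros)
    then have "((\<lambda>t. (pos t)\<^sup>2) has_real_derivative 0) (at t)"
      by (rule has_field_derivative_transform_within_open[where S="{..<0}"])
         (use \<open>t < 0\<close> in \<open>auto simp: pos_def\<close>)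
    then show ?thesis using \<open>t < 0\<close> by (simp add: pos_def)
  qed
qed

lemma C1_has_derivative: "C1 f \<Longrightarrow> (f has_derivative frechet_derivative f (at x)) (at x)"
  unfolding C1_def using frechet_derivative_works by blast

lemma pos_scale: "r > 0 \<Longrightarrow> r * pos (a + b / r) = pos (b + r * a)"
  by (auto simp: pos_def max_def field_simps)

lemma pd_La:
  assumes th: "C1 \<theta>" and g: "\<And>i. i < m \<Longrightarrow> C1 (\<lambda>x. g x i)" and rho: "\<rho> > 0"
  shows "pd (\<lambda>x. La \<theta> g m x u \<rho>) x j
       = pd \<theta> x j + (\<Sum>i<m. pos (u i + \<rho> * g x i) * pd (\<lambda>x. g x i) x j)"
proof -
  define Dt where "Dt = frechet_derivative \<theta> (at x)"
  define Dg where "Dg i = frechet_derivative (\<lambda>x. g x i) (at x)" for i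
  have eq: "(\<lambda>x. La \<theta> g m x u \<rho>) = (\<lambda>x. \<theta> x + \<rho> / 2 * (\<Sum>i<m. (pos (g x i + u i / \<rho>))\<^sup>2))"
    by (simp add: La_def vnorm_sq)
  have dg: "((\<lambda>x. (pos (g x i + u i / \<rho>))\<^sup>2) has_derivative
      (\<lambda>h. 2 * pos (g x i + u i / \<rho>) * Dg i h)) (at x)" if "i < m" for i
  proof -
    have d1: "((\<lambda>x. g x i + u i / \<rho>) has_derivative Dg i) (at x)"
      using C1_has_derivative[OF g[OF that]] unfolding Dg_def
      by (auto intro!: derivative_eq_intros)
    have d2: "((\<lambda>t. (pos t)\<^sup>2) has_derivative (\<lambda>h. (2 * pos (g x i + u i / \<rho>)) * h)) (at (g x i + u i / \<rho>))"
      using pos_sq_deriv[of "g x i + u i / \<rho>"] unfolding has_field_derivative_def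
      by simp
    from has_derivative_compose[OF d1 d2] show ?thesis by (simp add: mult.commute mult.left_commute)
  qed
  have D: "((\<lambda>x. La \<theta> g m x u \<rho>) has_derivative
      (\<lambda>h. Dt h + \<rho> / 2 * (\<Sum>i<m. 2 * pos (g x i + u i / \<rho>) * Dg i h))) (at x)"
    unfolding eq Dt_def
    by (intro has_derivative_add has_derivative_mult_right has_derivative_sum C1_has_derivative th dg) auto
  have "pd (\<lambda>x. La \<theta> g m x u \<rho>) x j = Dt (axis j 1) + \<rho> / 2 * (\<Sum>i<m. 2 * pos (g x i + u i / \<rho>) * Dg i (axis j 1))"
    unfolding pd_def frechet_derivative_at[OF D, symmetric] by simp
  also have "\<dots> = pd \<theta> x j + (\<Sum>i<m. pos (u i + \<rho> * g x i) * pd (\<lambda>x. g x i) x j)"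
  proof -
    have "\<rho> / 2 * (\<Sum>i<m. 2 * pos (g x i + u i / \<rho>) * Dg i (axis j 1))
        = (\<Sum>i<m. (\<rho> * pos (g x i + u i / \<rho>)) * Dg i (axis j 1))"
      by (simp add: sum_distrib_left mult.assoc)
    also have "\<dots> = (\<Sum>i<m. pos (u i + \<rho> * g x i) * pd (\<lambda>x. g x i) x j)"
      using pos_scale[OF rho] by (simp add: Dg_def pd_def)
    finally show ?thesis by (simp add: Dt_def pd_def)
  qed
  finally show ?thesis .
qed




definition APX :: "(real^'n \<Rightarrow> real) \<Rightarrow> (nat \<Rightarrow> real^'n \<Rightarrow> real) \<Rightarrow> 'n set \<Rightarrow> real^'n
    \<Rightarrow> nat set \<Rightarrow> real \<Rightarrow> bool" where
  "APX T F B xb A e \<longleftrightarrow> (\<exists>z \<beta>. dist z xb < e \<and> (\<forall>i. \<beta> i \<ge> 0) \<and>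
      (\<forall>j\<in>B. \<bar>pd T z j + (\<Sum>i\<in>A. \<beta> i * pd (F i) z j)\<bar> < e))"

lemma cont_compose_seq:
  "continuous_on UNIV f \<Longrightarrow> (X \<longlongrightarrow> l) F \<Longrightarrow> ((\<lambda>k. f (X k)) \<longlongrightarrow> f l) F"
  by (rule continuous_on_tendsto_compose[where s=UNIV]) simp_all


lemma lin_dep_pos:
  assumes "lin_dep B F A y"
  shows "\<exists>a. (\<exists>i\<in>A. a i > 0) \<and> (\<forall>j\<in>B. (\<Sum>i\<in>A. a i * pd (F i) y j) = 0)"
proof -
  from assms obtain a i where a: "i \<in> A" "a i \<noteq> 0" "\<forall>j\<in>B. (\<Sum>i\<in>A. a i * pd (F i) y j) = 0"
    unfolding lin_dep_def by blast
  show ?thesis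
  proof (cases "a i > 0")
    case True then show ?thesis using a by blast
  next
    case False
    then have p: "- a i > 0" using a by auto
    have "(\<Sum>i\<in>A. (- a i) * pd (F i) y j) = 0" if "j \<in> B" for j
    proof -
      have "(\<Sum>i\<in>A. (- a i) * pd (F i) y j) = - (\<Sum>i\<in>A. a i * pd (F i) y j)"
        by (simp add: sum_negf)
      then show ?thesis using a(3) that by simp
    qed
    then show ?thesis using a(1) p
      by (intro exI[of _ "\<lambda>i. - a i"]) blast
  qed
qed

lemma APX_mono: "APX T F B xb A e \<Longrightarrow> e \<le> e' \<Longrightarrow> APX T F B xb A e'"
  unfolding APX_def by (meson less_le_trans)

lemma drop_index:
  fixes b a :: "nat \<Rightarrow> real"
  assumes finA: "finite A" and b: "\<forall>i. b i \<ge> 0" and apos: "\<exists>i\<in>A. a i > 0"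
    and lin: "\<forall>j\<in>B. (\<Sum>i\<in>A. a i * X i j) = 0"
  shows "\<exists>i0\<in>A. \<exists>b'. (\<forall>i. b' i \<ge> 0) \<and>
     (\<forall>j\<in>B. (\<Sum>i\<in>A - {i0}. b' i * X i j) = (\<Sum>i\<in>A. b i * X i j))"
proof -
  define Ap where "Ap = {i\<in>A. a i > 0}"
  have finAp: "finite Ap" and neAp: "Ap \<noteq> {}" using finA apos by (auto simp: Ap_def)
  define ts where "ts = Min ((\<lambda>i. b i / a i) ` Ap)"
  have "ts \<in> (\<lambda>i. b i / a i) ` Ap" unfolding ts_def using finAp neAp by (intro Min_in) auto
  then obtain i0 where i0: "i0 \<in> Ap" "ts = b i0 / a i0" by auto
  have tsle: "ts \<le> b i / a i" if "i \<in> Ap" for i unfolding ts_def using finAp that by auto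
  have ts0: "ts \<ge> 0" using i0 b by (auto simp: Ap_def)
  define b' where "b' i = max 0 (b i - ts * a i)" for i
  have b'eq: "b' i = b i - ts * a i" if "i \<in> A" for i
  proof (cases "a i > 0")
    case True
    then have "ts \<le> b i / a i" using tsle that by (auto simp: Ap_def)
    then have "ts * a i \<le> b i" using True by (simp add: field_simps)
    then show ?thesis by (simp add: b'_def)
  next
    case False
    then have "ts * a i \<le> 0" using ts0 by (simp add: mult_nonneg_nonpos)
    then show ?thesis using b[rule_format, of i] by (simp add: b'_def)
  qed
  have b'i0: "b i0 - ts * a i0 = 0" using i0 by (auto simp: Ap_def)
  have i0A: "i0 \<in> A" using i0 by (auto simp: Ap_def)
  show ?thesis
  proof (intro bexI[OF _ i0A] exI[of _ b'] conjI ballI allI)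
    fix i show "b' i \<ge> 0" by (simp add: b'_def)
  next
    fix j assume j: "j \<in> B"
    have "(\<Sum>i\<in>A - {i0}. b' i * X i j) = (\<Sum>i\<in>A - {i0}. (b i - ts * a i) * X i j)"
      by (rule sum.cong) (auto simp: b'eq)
    also have "\<dots> = (\<Sum>i\<in>A. (b i - ts * a i) * X i j)"
      using sum.remove[OF finA i0A, of "\<lambda>i. (b i - ts * a i) * X i j"] b'i0 by simp
    also have "\<dots> = (\<Sum>i\<in>A. b i * X i j) - ts * (\<Sum>i\<in>A. a i * X i j)"
      by (simp add: left_diff_distrib sum_subtractf sum_distrib_left mult.assoc)
    also have "\<dots> = (\<Sum>i\<in>A. b i * X i j)" using lin j by simp
    finally show "(\<Sum>i\<in>A - {i0}. b' i * X i j) = (\<Sum>i\<in>A. b i * X i j)" .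
  qed
qed

lemma core:
  fixes T :: "real^'n \<Rightarrow> real" and F :: "nat \<Rightarrow> real^'n \<Rightarrow> real" and B :: "'n set"
  assumes contT: "\<forall>j. continuous_on UNIV (\<lambda>x. pd T x j)"
    and contF: "\<forall>i<q. \<forall>j. continuous_on UNIV (\<lambda>x. pd (F i) x j)"
    and feas: "\<forall>i<q. F i xb \<le> 0"
    and cpld: "CPLD B F q xb"
  shows "A \<subseteq> {i. i < q \<and> F i xb = 0} \<Longrightarrow> (\<forall>e>0. APX T F B xb A e) \<Longrightarrow>
    \<exists>mult. (\<forall>j\<in>B. pd T xb j + (\<Sum>i<q. mult i * pd (F i) xb j) = 0) \<and>
           (\<forall>i<q. min (- F i xb) (mult i) = 0)"
proof (induction "card A" arbitrary: A rule: less_induct)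
  case less
  have Asub: "A \<subseteq> {..<q}" using less.prems(1) by auto
  have finA: "finite A" using Asub finite_subset by blast
  have finB: "finite B" by simp
  have ex: "\<forall>k. \<exists>p. dist (fst p) xb < 1 / real (Suc k) \<and> (\<forall>i. snd p i \<ge> 0) \<and>
      (\<forall>j\<in>B. \<bar>pd T (fst p) j + (\<Sum>i\<in>A. snd p i * pd (F i) (fst p) j)\<bar> < 1 / real (Suc k))"
  proof
    fix k
    have "APX T F B xb A (1 / real (Suc k))" using less.prems(2) by simp
    then obtain z \<beta> where "dist z xb < 1 / real (Suc k)" "\<forall>i. \<beta> i \<ge> 0"
      "\<forall>j\<in>B. \<bar>pd T z j + (\<Sum>i\<in>A. \<beta> i * pd (F i) z j)\<bar> < 1 / real (Suc k)"
      unfolding APX_def by blast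
    then show "\<exists>p. dist (fst p) xb < 1 / real (Suc k) \<and> (\<forall>i. snd p i \<ge> 0) \<and>
      (\<forall>j\<in>B. \<bar>pd T (fst p) j + (\<Sum>i\<in>A. snd p i * pd (F i) (fst p) j)\<bar> < 1 / real (Suc k))"
      by (intro exI[of _ "(z, \<beta>)"]) simp
  qed
  from choice[OF ex] obtain p where p: "\<forall>k. dist (fst (p k)) xb < 1 / real (Suc k) \<and> (\<forall>i. snd (p k) i \<ge> 0) \<and>
      (\<forall>j\<in>B. \<bar>pd T (fst (p k)) j + (\<Sum>i\<in>A. snd (p k) i * pd (F i) (fst (p k)) j)\<bar> < 1 / real (Suc k))"
    by blast
  define z where "z k = fst (p k)" for k
  define \<beta> where "\<beta> k = snd (p k)" for k
  have zb: "\<And>k. dist (z k) xb < 1 / real (Suc k)" "\<And>k i. \<beta> k i \<ge> 0"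
    "\<And>k j. j \<in> B \<Longrightarrow> \<bar>pd T (z k) j + (\<Sum>i\<in>A. \<beta> k i * pd (F i) (z k) j)\<bar> < 1 / real (Suc k)"
    using p unfolding z_def \<beta>_def by auto
  define res where "res k j = pd T (z k) j + (\<Sum>i\<in>A. \<beta> k i * pd (F i) (z k) j)" for k j
  have inv0: "(\<lambda>k. 1 / real (Suc k)) \<longlonglongrightarrow> 0"
    using LIMSEQ_inverse_real_of_nat by (simp add: inverse_eq_divide)
  have zlim: "z \<longlonglongrightarrow> xb"
  proof -
    have "\<forall>k. norm (dist (z k) xb) \<le> 1 / real (Suc k)" using zb(1) less_imp_le by fastforce
    then have "(\<lambda>k. dist (z k) xb) \<longlonglongrightarrow> 0"
      by (intro Lim_null_comparison[OF always_eventually inv0])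
    then show ?thesis using tendsto_dist_iff by blast
  qed
  have reslim: "(\<lambda>k. res k j) \<longlonglongrightarrow> 0" if "j \<in> B" for j
  proof -
    have "\<forall>k. norm (res k j) \<le> 1 / real (Suc k)" using zb(3)[OF that] less_imp_le unfolding res_def by fastforce
    then show ?thesis by (intro Lim_null_comparison[OF always_eventually inv0])
  qed
  define t where "t k = max 1 (\<Sum>i\<in>A. \<beta> k i)" for k
  have t1: "t k \<ge> 1" for k by (simp add: t_def)
  have bt: "\<beta> k i \<le> t k" if "i \<in> A" for k i
  proof -
    have "\<beta> k i \<le> (\<Sum>i\<in>A. \<beta> k i)" using finA that zb(2) by (intro member_le_sum) auto
    then show ?thesis by (simp add: t_def)
  qed
  define f where "f k ob = (case ob of None \<Rightarrow> 1 / t k | Some i \<Rightarrow> \<beta> k i / t k)" for k ob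
  have "\<exists>r. strict_mono r \<and> (\<forall>ob\<in>insert None (Some ` A). convergent (\<lambda>k. f (r k) ob))"
  proof (rule BW_multi)
    show "\<forall>ob\<in>insert None (Some ` A). bounded (range (\<lambda>k. f k ob))"
    proof
      fix ob assume ob: "ob \<in> insert None (Some ` A)"
      have "\<bar>f k ob\<bar> \<le> 1" for k
      proof (cases ob)
        case None then show ?thesis using t1[of k] by (simp add: f_def)
      next
        case (Some i)
        then have "i \<in> A" using ob by auto
        then have "\<beta> k i \<le> t k" by (rule bt)
        then show ?thesis using Some t1[of k] zb(2)[of k i] by (simp add: f_def)
      qed
      then show "bounded (range (\<lambda>k. f k ob))" unfolding bounded_iff by auto
    qed
  qed (use finA in auto)
  then obtain r where r: "strict_mono r" "\<And>ob. ob \<in> insert None (Some ` A) \<Longrightarrow> convergent (\<lambda>k. f (r k) ob)"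
    by blast
  define c where "c = lim (\<lambda>k. 1 / t (r k))"
  define \<gamma> where "\<gamma> i = lim (\<lambda>k. \<beta> (r k) i / t (r k))" for i
  have clim: "(\<lambda>k. 1 / t (r k)) \<longlonglongrightarrow> c"
    using r(2)[of None] unfolding c_def f_def by (simp add: convergent_LIMSEQ_iff)
  have glim: "(\<lambda>k. \<beta> (r k) i / t (r k)) \<longlonglongrightarrow> \<gamma> i" if "i \<in> A" for i
    using r(2)[of "Some i"] that unfolding \<gamma>_def f_def by (simp add: convergent_LIMSEQ_iff)
  have c0: "c \<ge> 0"
    by (rule tendsto_lowerbound[OF clim]) (auto intro!: always_eventually simp: order_trans[OF zero_le_one t1])
  have g0: "\<gamma> i \<ge> 0" if "i \<in> A" for i
    by (rule tendsto_lowerbound[OF glim[OF that]])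
       (auto intro!: always_eventually divide_nonneg_nonneg zb(2) order_trans[OF zero_le_one t1])
  have zr: "(\<lambda>k. z (r k)) \<longlonglongrightarrow> xb" using LIMSEQ_subseq_LIMSEQ[OF zlim r(1)] by (simp add: o_def)
  have resr: "(\<lambda>k. res (r k) j) \<longlonglongrightarrow> 0" if "j \<in> B" for j
    using LIMSEQ_subseq_LIMSEQ[OF reslim[OF that] r(1)] by (simp add: o_def)
  have Tlim: "(\<lambda>k. pd T (z (r k)) j) \<longlonglongrightarrow> pd T xb j" for j
    using contT by (intro cont_compose_seq[OF _ zr]) auto
  have Flim: "(\<lambda>k. pd (F i) (z (r k)) j) \<longlonglongrightarrow> pd (F i) xb j" if "i \<in> A" for i j
    using contF that Asub by (intro cont_compose_seq[OF _ zr]) auto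
  show ?case
  proof (cases "c > 0")
    case True
    define mult where "mult i = (if i \<in> A then \<gamma> i / c else 0)" for i
    have blim: "(\<lambda>k. \<beta> (r k) i) \<longlonglongrightarrow> \<gamma> i / c" if "i \<in> A" for i
    proof -
      have "(\<lambda>k. (\<beta> (r k) i / t (r k)) / (1 / t (r k))) \<longlonglongrightarrow> \<gamma> i / c"
        by (rule tendsto_divide[OF glim[OF that] clim]) (use True in auto)
      moreover have "(\<beta> (r k) i / t (r k)) / (1 / t (r k)) = \<beta> (r k) i" for k
        using t1[of "r k"] by simp
      ultimately show ?thesis by simp
    qed
    have stat: "pd T xb j + (\<Sum>i\<in>A. (\<gamma> i / c) * pd (F i) xb j) = 0" if j: "j \<in> B" for j
    proof -
      have "(\<lambda>k. res (r k) j) \<longlonglongrightarrow> pd T xb j + (\<Sum>i\<in>A. (\<gamma> i / c) * pd (F i) xb j)"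
        unfolding res_def by (intro tendsto_intros Tlim blim Flim)
      from LIMSEQ_unique[OF this resr[OF j]] show ?thesis .
    qed
    show ?thesis
    proof (intro exI[of _ mult] conjI allI impI ballI)
      fix j assume j: "j \<in> B"
      have "(\<Sum>i<q. mult i * pd (F i) xb j) = (\<Sum>i\<in>A. (\<gamma> i / c) * pd (F i) xb j)"
      proof -
        have "(\<Sum>i<q. mult i * pd (F i) xb j) = (\<Sum>i<q. if i \<in> A then (\<gamma> i / c) * pd (F i) xb j else 0)"
          by (rule sum.cong) (auto simp: mult_def)
        also have "\<dots> = (\<Sum>i\<in>{..<q} \<inter> A. (\<gamma> i / c) * pd (F i) xb j)"
          by (rule sum.inter_restrict[symmetric]) simp
        also have "{..<q} \<inter> A = A" using Asub by auto
        finally show ?thesis .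
      qed
      then show "pd T xb j + (\<Sum>i<q. mult i * pd (F i) xb j) = 0" using stat[OF j] by simp
    next
      fix i assume i: "i < q"
      show "min (- F i xb) (mult i) = 0"
      proof (cases "i \<in> A")
        case True
        then have "F i xb = 0" using less.prems(1) by auto
        moreover have "\<gamma> i / c \<ge> 0" using g0[OF True] c0 by simp
        ultimately show ?thesis using True by (simp add: mult_def)
      next
        case False
        then show ?thesis using feas i by (simp add: mult_def)
      qed
    qed
  next
    case False
    then have c00: "c = 0" using c0 by simp
    have "\<forall>\<^sub>F k in sequentially. 1 / t (r k) < 1"
      using clim c00 by (auto intro: order_tendstoD)
    then have ev1: "\<forall>\<^sub>F k in sequentially. (\<Sum>i\<in>A. \<beta> (r k) i / t (r k)) = 1"
    proof eventually_elim
      case (elim k)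
      then have "t (r k) > 1" using t1[of "r k"] by (simp add: field_simps)
      then have "t (r k) = (\<Sum>i\<in>A. \<beta> (r k) i)" by (simp add: t_def)
      then show ?case using \<open>t (r k) > 1\<close> by (simp add: sum_divide_distrib[symmetric])
    qed
    have "(\<lambda>k. \<Sum>i\<in>A. \<beta> (r k) i / t (r k)) \<longlonglongrightarrow> (\<Sum>i\<in>A. \<gamma> i)"
      by (intro tendsto_sum glim)
    moreover have "(\<lambda>k. \<Sum>i\<in>A. \<beta> (r k) i / t (r k)) \<longlonglongrightarrow> 1"
      using ev1 by (rule tendsto_eventually)
    ultimately have sg1: "(\<Sum>i\<in>A. \<gamma> i) = 1" using LIMSEQ_unique by blast
    then obtain i1 where i1: "i1 \<in> A" "\<gamma> i1 \<noteq> 0" by (metis sum.neutral zero_neq_one)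
    have pl0: "(\<Sum>i\<in>A. \<gamma> i * pd (F i) xb j) = 0" if j: "j \<in> B" for j
    proof -
      have "(\<lambda>k. res (r k) j * (1 / t (r k))) \<longlonglongrightarrow> 0 * c"
        by (intro tendsto_mult resr j clim)
      moreover have "(\<lambda>k. res (r k) j * (1 / t (r k))) \<longlonglongrightarrow> pd T xb j * c + (\<Sum>i\<in>A. \<gamma> i * pd (F i) xb j)"
      proof -
        have "(\<lambda>k. pd T (z (r k)) j * (1 / t (r k)) + (\<Sum>i\<in>A. (\<beta> (r k) i / t (r k)) * pd (F i) (z (r k)) j))
            \<longlonglongrightarrow> pd T xb j * c + (\<Sum>i\<in>A. \<gamma> i * pd (F i) xb j)"
          by (intro tendsto_intros Tlim clim glim Flim)
        moreover have "res (r k) j * (1 / t (r k)) = pd T (z (r k)) j * (1 / t (r k)) + (\<Sum>i\<in>A. (\<beta> (r k) i / t (r k)) * pd (F i) (z (r k)) j)" for k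
          unfolding res_def by (simp add: add_divide_distrib sum_divide_distrib)
        ultimately show ?thesis by simp
      qed
      ultimately have "0 * c = pd T xb j * c + (\<Sum>i\<in>A. \<gamma> i * pd (F i) xb j)"
        by (rule LIMSEQ_unique)
      then show ?thesis using c00 by simp
    qed
    have pld: "pos_lin_dep B F A xb"
      unfolding pos_lin_dep_def
      apply (rule exI[of _ \<gamma>])
      using g0 i1 pl0 by blast
    obtain S where S: "open S" "xb \<in> S" "\<forall>y\<in>S. lin_dep B F A y"
      using cpld[unfolded CPLD_def, rule_format, OF less.prems(1) pld] by blast
    have "\<exists>i\<in>A. \<forall>e>0. APX T F B xb (A - {i}) e"
    proof (rule swap_eps[OF finA])
      show "\<forall>i e e'. APX T F B xb (A - {i}) e \<longrightarrow> e \<le> e' \<longrightarrow> APX T F B xb (A - {i}) e'"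
        by (metis APX_mono)
      show "\<forall>e>0. \<exists>i\<in>A. APX T F B xb (A - {i}) e"
      proof (intro allI impI)
        fix e :: real assume e: "e > 0"
        have "\<forall>\<^sub>F k in sequentially. z (r k) \<in> S"
          using zr S(1,2) by (rule topological_tendstoD)
        moreover have "\<forall>\<^sub>F k in sequentially. dist (z (r k)) xb < e"
          using zr e by (rule tendstoD)
        moreover have "\<forall>\<^sub>F k in sequentially. \<forall>j\<in>B. \<bar>res (r k) j\<bar> < e"
        proof (rule eventually_ball_finite[OF finB], rule ballI)
          fix j assume "j \<in> B"
          from tendstoD[OF resr[OF this] e] show "\<forall>\<^sub>F k in sequentially. \<bar>res (r k) j\<bar> < e"
            by simp
        qed
        ultimately have "\<forall>\<^sub>F k in sequentially. z (r k) \<in> S \<and> dist (z (r k)) xb < e \<and> (\<forall>j\<in>B. \<bar>res (r k) j\<bar> < e)"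
          by eventually_elim auto
        then obtain N where N: "\<forall>k\<ge>N. z (r k) \<in> S \<and> dist (z (r k)) xb < e \<and> (\<forall>j\<in>B. \<bar>res (r k) j\<bar> < e)"
          unfolding eventually_sequentially by blast
        define k where "k = N"
        have k: "z (r k) \<in> S" "dist (z (r k)) xb < e" "\<forall>j\<in>B. \<bar>res (r k) j\<bar> < e"
          using N unfolding k_def by auto
        from lin_dep_pos[OF S(3)[rule_format, OF k(1)]] obtain a where
          a: "\<exists>i\<in>A. a i > 0" "\<forall>j\<in>B. (\<Sum>i\<in>A. a i * pd (F i) (z (r k)) j) = 0" by blast
        have zbk: "\<forall>i. \<beta> (r k) i \<ge> 0" using zb(2) by simp
        from drop_index[where X="\<lambda>i j. pd (F i) (z (r k)) j", OF finA zbk a(1) a(2)]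
        obtain i0 b' where i0: "i0 \<in> A" "\<forall>i. b' i \<ge> 0"
          "\<forall>j\<in>B. (\<Sum>i\<in>A - {i0}. b' i * pd (F i) (z (r k)) j) = (\<Sum>i\<in>A. \<beta> (r k) i * pd (F i) (z (r k)) j)"
          by blast
        have "\<forall>j\<in>B. \<bar>pd T (z (r k)) j + (\<Sum>i\<in>A - {i0}. b' i * pd (F i) (z (r k)) j)\<bar> < e"
          using k(3) i0(3) unfolding res_def by simp
        then have "APX T F B xb (A - {i0}) e"
          unfolding APX_def using k(2) i0(2) by blast
        then show "\<exists>i\<in>A. APX T F B xb (A - {i}) e" using i0(1) by blast
      qed
    qed
    then obtain i where i: "i \<in> A" "\<forall>e>0. APX T F B xb (A - {i}) e" by blast
    have "card (A - {i}) < card A" using card_Diff1_less[OF finA i(1)] .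
    moreover have "A - {i} \<subseteq> {i. i < q \<and> F i xb = 0}" using less.prems(1) by auto
    ultimately show ?thesis by (rule less.hyps[OF _ _ i(2)])
  qed
qed




lemma seq_APX:
  fixes T :: "real^'n \<Rightarrow> real" and F :: "nat \<Rightarrow> real^'n \<Rightarrow> real" and B :: "'n set"
    and y :: "nat \<Rightarrow> real^'n" and \<alpha> :: "nat \<Rightarrow> nat \<Rightarrow> real"
  assumes contT: "\<forall>j. continuous_on UNIV (\<lambda>x. pd T x j)"
    and contF: "\<forall>i<q. \<forall>j. continuous_on UNIV (\<lambda>x. pd (F i) x j)"
    and ylim: "y \<longlonglongrightarrow> xb"
    and res: "\<forall>j\<in>B. (\<lambda>k. pd T (y k) j + (\<Sum>i<q. \<alpha> k i * pd (F i) (y k) j)) \<longlonglongrightarrow> 0"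
    and H1: "\<forall>i<q. F i xb < 0 \<longrightarrow> (\<lambda>k. \<alpha> k i) \<longlonglongrightarrow> 0"
    and H2: "\<forall>i<q. (\<lambda>k. min 0 (\<alpha> k i)) \<longlonglongrightarrow> 0"
    and feas: "\<forall>i<q. F i xb \<le> 0"
  shows "\<forall>e>0. APX T F B xb {i. i < q \<and> F i xb = 0} e"
proof -
  define A where "A = {i. i < q \<and> F i xb = 0}"
  have Asub: "A \<subseteq> {..<q}" by (auto simp: A_def)
  have finA: "finite A" using Asub finite_subset by blast
  define \<beta> where "\<beta> k i = max 0 (\<alpha> k i)" for k i
  have Flim: "(\<lambda>k. pd (F i) (y k) j) \<longlonglongrightarrow> pd (F i) xb j" if "i < q" for i j
    using contF that by (intro cont_compose_seq[OF _ ylim]) auto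
  have key: "(\<lambda>k. pd T (y k) j + (\<Sum>i\<in>A. \<beta> k i * pd (F i) (y k) j)) \<longlonglongrightarrow> 0" if j: "j \<in> B" for j
  proof -
    have eq: "pd T (y k) j + (\<Sum>i\<in>A. \<beta> k i * pd (F i) (y k) j)
      = (pd T (y k) j + (\<Sum>i<q. \<alpha> k i * pd (F i) (y k) j))
        - (\<Sum>i\<in>{..<q} - A. \<alpha> k i * pd (F i) (y k) j)
        - (\<Sum>i\<in>A. min 0 (\<alpha> k i) * pd (F i) (y k) j)" for k
    proof -
      have s1: "(\<Sum>i<q. \<alpha> k i * pd (F i) (y k) j) = (\<Sum>i\<in>{..<q} - A. \<alpha> k i * pd (F i) (y k) j)
          + (\<Sum>i\<in>A. \<alpha> k i * pd (F i) (y k) j)"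
        by (rule sum.subset_diff[OF Asub]) simp
      have s2: "(\<Sum>i\<in>A. \<alpha> k i * pd (F i) (y k) j) = (\<Sum>i\<in>A. \<beta> k i * pd (F i) (y k) j)
          + (\<Sum>i\<in>A. min 0 (\<alpha> k i) * pd (F i) (y k) j)"
      proof -
        have "\<alpha> k i * X = \<beta> k i * X + min 0 (\<alpha> k i) * X" for i X
          by (simp add: \<beta>_def max_def min_def distrib_right[symmetric])
        then show ?thesis by (simp add: sum.distrib)
      qed
      show ?thesis using s1 s2 by simp
    qed
    have l1: "(\<lambda>k. pd T (y k) j + (\<Sum>i<q. \<alpha> k i * pd (F i) (y k) j)) \<longlonglongrightarrow> 0" using res j by blast
    have l2: "(\<lambda>k. \<Sum>i\<in>{..<q} - A. \<alpha> k i * pd (F i) (y k) j) \<longlonglongrightarrow> (\<Sum>i\<in>{..<q} - A. 0 * pd (F i) xb j)"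
    proof (rule tendsto_sum, rule tendsto_mult)
      fix i assume i: "i \<in> {..<q} - A"
      then have "F i xb < 0" using feas by (force simp: A_def)
      then show "(\<lambda>k. \<alpha> k i) \<longlonglongrightarrow> 0" using H1 i by auto
      show "(\<lambda>k. pd (F i) (y k) j) \<longlonglongrightarrow> pd (F i) xb j" using Flim i by auto
    qed
    have l3: "(\<lambda>k. \<Sum>i\<in>A. min 0 (\<alpha> k i) * pd (F i) (y k) j) \<longlonglongrightarrow> (\<Sum>i\<in>A. 0 * pd (F i) xb j)"
    proof (rule tendsto_sum, rule tendsto_mult)
      fix i assume i: "i \<in> A"
      then show "(\<lambda>k. min 0 (\<alpha> k i)) \<longlonglongrightarrow> 0" using H2 by (auto simp: A_def)
      show "(\<lambda>k. pd (F i) (y k) j) \<longlonglongrightarrow> pd (F i) xb j" using Flim i by (auto simp: A_def)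
    qed
    have "(\<lambda>k. (pd T (y k) j + (\<Sum>i<q. \<alpha> k i * pd (F i) (y k) j))
        - (\<Sum>i\<in>{..<q} - A. \<alpha> k i * pd (F i) (y k) j)
        - (\<Sum>i\<in>A. min 0 (\<alpha> k i) * pd (F i) (y k) j)) \<longlonglongrightarrow> 0 - 0 - 0"
      using tendsto_diff[OF tendsto_diff[OF l1 l2] l3] by simp
    then show ?thesis unfolding eq by simp
  qed
  show ?thesis unfolding A_def[symmetric]
  proof (intro allI impI)
    fix e :: real assume e: "e > 0"
    have "\<forall>\<^sub>F k in sequentially. dist (y k) xb < e" using ylim e by (rule tendstoD)
    moreover have "\<forall>\<^sub>F k in sequentially. \<forall>j\<in>B. \<bar>pd T (y k) j + (\<Sum>i\<in>A. \<beta> k i * pd (F i) (y k) j)\<bar> < e"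
    proof (rule eventually_ball_finite, simp, rule ballI)
      fix j assume "j \<in> B"
      from tendstoD[OF key[OF this] e]
      show "\<forall>\<^sub>F k in sequentially. \<bar>pd T (y k) j + (\<Sum>i\<in>A. \<beta> k i * pd (F i) (y k) j)\<bar> < e" by simp
    qed
    ultimately have "\<forall>\<^sub>F k in sequentially. dist (y k) xb < e \<and> (\<forall>j\<in>B. \<bar>pd T (y k) j + (\<Sum>i\<in>A. \<beta> k i * pd (F i) (y k) j)\<bar> < e)"
      by (rule eventually_conj)
    then obtain N where N: "\<forall>k\<ge>N. dist (y k) xb < e \<and> (\<forall>j\<in>B. \<bar>pd T (y k) j + (\<Sum>i\<in>A. \<beta> k i * pd (F i) (y k) j)\<bar> < e)"
      unfolding eventually_sequentially by blast
    then have "dist (y N) xb < e" "\<forall>j\<in>B. \<bar>pd T (y N) j + (\<Sum>i\<in>A. \<beta> N i * pd (F i) (y N) j)\<bar> < e"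
      by auto
    moreover have "\<forall>i. \<beta> N i \<ge> 0" by (simp add: \<beta>_def)
    ultimately show "APX T F B xb A e" unfolding APX_def by blast
  qed
qed

lemma emfcq_cpld:
  fixes F :: "nat \<Rightarrow> real^'n \<Rightarrow> real" and B :: "'n set"
  assumes d: "\<forall>i<q. F i xb \<ge> 0 \<longrightarrow> (\<Sum>j\<in>B. pd (F i) xb j * d j) < 0"
  shows "CPLD B F q xb"
  unfolding CPLD_def
proof (intro allI impI)
  fix I assume I: "I \<subseteq> {i. i < q \<and> F i xb = 0}" and pl: "pos_lin_dep B F I xb"
  have finI: "finite I" using I by (rule finite_subset) auto
  from pl obtain a i0 where a: "\<forall>i\<in>I. a i \<ge> 0" "i0 \<in> I" "a i0 \<noteq> 0"
    "\<forall>j\<in>B. (\<Sum>i\<in>I. a i * pd (F i) xb j) = 0"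
    unfolding pos_lin_dep_def by blast
  define D where "D i = (\<Sum>j\<in>B. pd (F i) xb j * d j)" for i
  have Dneg: "D i < 0" if "i \<in> I" for i using d I that unfolding D_def by force
  have "0 = (\<Sum>j\<in>B. (\<Sum>i\<in>I. a i * pd (F i) xb j) * d j)" using a(4) by simp
  also have "\<dots> = (\<Sum>i\<in>I. a i * D i)"
    unfolding D_def by (simp add: sum_distrib_right sum_distrib_left sum.swap[of _ B] mult.assoc)
  also have "\<dots> = a i0 * D i0 + (\<Sum>i\<in>I - {i0}. a i * D i)"
    using sum.remove[OF finI a(2)] by simp
  also have "\<dots> < 0"
  proof -
    have "a i0 > 0" using a by force
    then have "a i0 * D i0 < 0" using Dneg[OF a(2)] by (simp add: mult_pos_neg)
    moreover have "(\<Sum>i\<in>I - {i0}. a i * D i) \<le> 0"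
      using a(1) Dneg by (intro sum_nonpos) (simp add: mult_nonneg_nonpos less_imp_le)
    ultimately show ?thesis by simp
  qed
  finally show "\<exists>S. open S \<and> xb \<in> S \<and> (\<forall>y\<in>S. lin_dep B F I y)" by simp
qed

lemma emf_contra:
  fixes T :: "real^'n \<Rightarrow> real" and F :: "nat \<Rightarrow> real^'n \<Rightarrow> real" and B :: "'n set"
    and y :: "nat \<Rightarrow> real^'n" and \<alpha> :: "nat \<Rightarrow> nat \<Rightarrow> real"
  assumes contT: "\<forall>j. continuous_on UNIV (\<lambda>x. pd T x j)"
    and contF: "\<forall>i<q. \<forall>j. continuous_on UNIV (\<lambda>x. pd (F i) x j)"
    and ylim: "y \<longlonglongrightarrow> xb"
    and res: "\<forall>j\<in>B. (\<lambda>k. pd T (y k) j + (\<Sum>i<q. \<alpha> k i * pd (F i) (y k) j)) \<longlonglongrightarrow> 0"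
    and H1: "\<forall>i<q. F i xb < 0 \<longrightarrow> (\<lambda>k. \<alpha> k i) \<longlonglongrightarrow> 0"
    and H2: "\<forall>i<q. (\<lambda>k. min 0 (\<alpha> k i)) \<longlonglongrightarrow> 0"
    and d: "\<forall>i<q. F i xb \<ge> 0 \<longrightarrow> (\<Sum>j\<in>B. pd (F i) xb j * d j) < 0"
    and i0: "i0 < q" "F i0 xb \<ge> 0"
    and big: "filterlim (\<lambda>k. \<alpha> k i0) at_top sequentially"
  shows False
proof -
  define D where "D i x = (\<Sum>j\<in>B. pd (F i) x j * d j)" for i x
  have Dlim: "(\<lambda>k. D i (y k)) \<longlonglongrightarrow> D i xb" if "i < q" for i
    unfolding D_def using contF that by (intro tendsto_intros cont_compose_seq[OF _ ylim]) auto
  define TT where "TT k = (\<Sum>j\<in>B. pd T (y k) j * d j)" for k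
  have TTlim: "TT \<longlonglongrightarrow> (\<Sum>j\<in>B. pd T xb j * d j)"
    unfolding TT_def using contT by (intro tendsto_intros cont_compose_seq[OF _ ylim]) auto
  define S where "S k = (\<Sum>j\<in>B. (pd T (y k) j + (\<Sum>i<q. \<alpha> k i * pd (F i) (y k) j)) * d j)" for k
  have Slim: "S \<longlonglongrightarrow> 0"
  proof -
    have "S \<longlonglongrightarrow> (\<Sum>j\<in>B. 0 * d j)"
      unfolding S_def using res by (intro tendsto_sum tendsto_mult tendsto_const) auto
    then show ?thesis by simp
  qed
  have Seq: "S k = TT k + (\<Sum>i<q. \<alpha> k i * D i (y k))" for k
    unfolding S_def TT_def D_def
    by (simp add: distrib_right sum.distrib sum_distrib_right sum_distrib_left sum.swap[of _ B] mult.assoc)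
  define w where "w i k = \<bar>min 0 (\<alpha> k i)\<bar> * \<bar>D i (y k)\<bar> + (if F i xb < 0 then \<bar>\<alpha> k i * D i (y k)\<bar> else 0)" for i k
  have wlim: "(\<lambda>k. w i k) \<longlonglongrightarrow> 0" if i: "i < q" for i
  proof -
    have a: "(\<lambda>k. \<bar>min 0 (\<alpha> k i)\<bar> * \<bar>D i (y k)\<bar>) \<longlonglongrightarrow> \<bar>0\<bar> * \<bar>D i xb\<bar>"
      using H2 i by (intro tendsto_intros Dlim i) auto
    have b: "(\<lambda>k. (if F i xb < 0 then \<bar>\<alpha> k i * D i (y k)\<bar> else 0)) \<longlonglongrightarrow> 0"
    proof (cases "F i xb < 0")
      case True
      have "(\<lambda>k. \<bar>\<alpha> k i * D i (y k)\<bar>) \<longlonglongrightarrow> \<bar>0 * D i xb\<bar>"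
        using H1 i True by (intro tendsto_intros Dlim i) auto
      then show ?thesis using True by simp
    qed simp
    show ?thesis using tendsto_add[OF a b] unfolding w_def by simp
  qed
  define W where "W k = (\<Sum>i\<in>{..<q} - {i0}. w i k)" for k
  have Wlim: "W \<longlonglongrightarrow> 0"
  proof -
    have "W \<longlonglongrightarrow> (\<Sum>i\<in>{..<q} - {i0}. 0)" unfolding W_def by (intro tendsto_sum wlim) auto
    then show ?thesis by simp
  qed
  define \<delta> where "\<delta> = - D i0 xb / 2"
  have Di0: "D i0 xb < 0" using d i0 unfolding D_def by auto
  then have \<delta>0: "\<delta> > 0" by (simp add: \<delta>_def)
  have ev1: "\<forall>\<^sub>F k in sequentially. \<forall>i\<in>{i. i < q \<and> F i xb \<ge> 0}. D i (y k) < 0"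
  proof (rule eventually_ball_finite, simp, rule ballI)
    fix i assume "i \<in> {i. i < q \<and> F i xb \<ge> 0}"
    then have "i < q" "D i xb < 0" using d unfolding D_def by auto
    then show "\<forall>\<^sub>F k in sequentially. D i (y k) < 0" using Dlim order_tendstoD(2) by blast
  qed
  have ev2: "\<forall>\<^sub>F k in sequentially. D i0 (y k) < - \<delta>"
    using Dlim[OF i0(1)] Di0 by (intro order_tendstoD(2)) (auto simp: \<delta>_def)
  define L where "L = (\<Sum>j\<in>B. pd T xb j * d j)"
  have Rlim: "(\<lambda>k. W k - S k + TT k) \<longlonglongrightarrow> 0 - 0 + L"
    unfolding L_def by (intro tendsto_intros Wlim Slim TTlim)
  have ev3: "\<forall>\<^sub>F k in sequentially. W k - S k + TT k < L + 1"
    using Rlim by (intro order_tendstoD(2)) auto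
  have ev4: "\<forall>\<^sub>F k in sequentially. (L + 1) / \<delta> < \<alpha> k i0"
    using big by (simp add: filterlim_at_top_dense)
  have ev5: "\<forall>\<^sub>F k in sequentially. 0 < \<alpha> k i0"
    using big by (simp add: filterlim_at_top_dense)
  have "\<forall>\<^sub>F k in sequentially. False"
    using ev1 ev2 ev3 ev4 ev5
  proof eventually_elim
    case (elim k)
    have termle: "\<alpha> k i * D i (y k) \<le> w i k" if i: "i < q" for i
    proof (cases "F i xb < 0")
      case True
      have "0 \<le> \<bar>min 0 (\<alpha> k i)\<bar> * \<bar>D i (y k)\<bar>" by (rule mult_nonneg_nonneg) (rule abs_ge_zero)+
      moreover have "\<alpha> k i * D i (y k) \<le> \<bar>\<alpha> k i * D i (y k)\<bar>" by (rule abs_ge_self)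
      ultimately show ?thesis unfolding w_def if_P[OF True] by linarith
    next
      case False
      then have Dn: "D i (y k) < 0" using elim(1) i by auto
      show ?thesis
      proof (cases "\<alpha> k i \<ge> 0")
        case True
        then have "\<alpha> k i * D i (y k) \<le> 0" using Dn by (simp add: mult_nonneg_nonpos)
        also have "0 \<le> w i k" unfolding w_def
          by (intro add_nonneg_nonneg mult_nonneg_nonneg abs_ge_zero) simp
        finally show ?thesis .
      next
        case f2: False
        then have "\<alpha> k i * D i (y k) = \<bar>min 0 (\<alpha> k i)\<bar> * \<bar>D i (y k)\<bar>"
          using Dn by (simp add: min_def abs_if)
        then show ?thesis unfolding w_def if_not_P[OF False] by linarith
      qed
    qed
    have "(\<Sum>i<q. \<alpha> k i * D i (y k)) = \<alpha> k i0 * D i0 (y k) + (\<Sum>i\<in>{..<q} - {i0}. \<alpha> k i * D i (y k))"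
      using sum.remove[of "{..<q}" i0] i0(1) by simp
    also have "\<dots> \<le> - \<delta> * \<alpha> k i0 + W k"
    proof (rule add_mono)
      show "\<alpha> k i0 * D i0 (y k) \<le> - \<delta> * \<alpha> k i0"
      proof -
        have "\<alpha> k i0 * D i0 (y k) \<le> \<alpha> k i0 * (- \<delta>)"
          using elim(2) elim(5) by (intro mult_left_mono) auto
        then show ?thesis by (simp add: mult.commute)
      qed
      show "(\<Sum>i\<in>{..<q} - {i0}. \<alpha> k i * D i (y k)) \<le> W k"
        unfolding W_def by (intro sum_mono termle) auto
    qed
    finally have f1: "(\<Sum>i<q. \<alpha> k i * D i (y k)) \<le> - \<delta> * \<alpha> k i0 + W k" .
    have f2: "L + 1 < \<delta> * \<alpha> k i0" using elim(4) \<delta>0 by (simp add: field_simps)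
    show False using f1 f2 Seq[of k] elim(3) by linarith
  qed
  then show False by simp
qed




lemma sum_split: "(\<Sum>i<a+(b::nat). f i) = (\<Sum>i<a. f i) + (\<Sum>i<b. (f (a+i) :: real))"
  by (induction b) auto

lemma min_lim:
  fixes a b :: "nat \<Rightarrow> real"
  assumes m: "(\<lambda>k. min (a k) (b k)) \<longlonglongrightarrow> 0" and a: "a \<longlonglongrightarrow> c" and c: "c > 0"
  shows "b \<longlonglongrightarrow> 0"
proof -
  have "\<forall>\<^sub>F k in sequentially. min (a k) (b k) < c / 2" using m c by (intro order_tendstoD(2)) auto
  moreover have "\<forall>\<^sub>F k in sequentially. a k > c / 2" using a c by (intro order_tendstoD(1)) auto
  ultimately have "\<forall>\<^sub>F k in sequentially. min (a k) (b k) = b k"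
    by eventually_elim (auto simp: min_def)
  from Lim_transform_eventually[OF m this] show ?thesis by simp
qed

lemma min_feas:
  fixes a b :: "nat \<Rightarrow> real"
  assumes m: "(\<lambda>k. min (a k) (b k)) \<longlonglongrightarrow> 0" and a: "a \<longlonglongrightarrow> c"
  shows "c \<ge> 0"
  using m a by (rule LIMSEQ_le) auto

lemma abs_min0: "\<bar>min 0 (b::real)\<bar> \<le> \<bar>min a b\<bar>"
  by (auto simp: min_def)

lemma rho_pos:
  assumes upd: "\<forall>k. \<rho> (Suc k) = (if P k then \<rho> k else \<gamma> * \<rho> k)" and g: "(\<gamma>::real) > 1" and r0: "\<rho> 0 > 0"
  shows "\<rho> k > 0"
proof (induction k)
  case 0 then show ?case using r0 by simp
next
  case (Suc k)
  have "\<rho> (Suc k) = (if P k then \<rho> k else \<gamma> * \<rho> k)" using upd by blast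
  then show ?case using Suc g by (simp split: if_splits)
qed

lemma rho_dichotomy:
  assumes upd: "\<forall>k. \<rho> (Suc k) = (if P k then \<rho> k else \<gamma> * \<rho> k)" and g: "(\<gamma>::real) > 1" and r0: "\<rho> 0 > 0"
  shows "(\<exists>K. \<forall>k\<ge>K. P k) \<or> filterlim \<rho> at_top sequentially"
proof (cases "\<exists>K. \<forall>k\<ge>K. P k")
  case True then show ?thesis by blast
next
  case False
  then have nP: "\<not> (\<exists>K. \<forall>k\<ge>K. P k)" .
  have pos: "\<rho> k > 0" for k using rho_pos[OF upd g r0] .
  have inc: "incseq \<rho>"
  proof (rule incseq_SucI)
    fix k
    have "\<rho> (Suc k) = (if P k then \<rho> k else \<gamma> * \<rho> k)" using upd by blast
    then show "\<rho> k \<le> \<rho> (Suc k)" using pos[of k] g by (simp split: if_splits)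
  qed
  have grow: "\<exists>K. \<rho> K \<ge> \<rho> 0 * \<gamma> ^ N" for N
  proof (induction N)
    case 0 then show ?case by auto
  next
    case (Suc N)
    then obtain K where K: "\<rho> K \<ge> \<rho> 0 * \<gamma> ^ N" by blast
    obtain k where k: "k \<ge> K" "\<not> P k" using nP by blast
    have "\<rho> (Suc k) = (if P k then \<rho> k else \<gamma> * \<rho> k)" using upd by blast
    then have "\<rho> (Suc k) = \<gamma> * \<rho> k" using k by simp
    also have "\<gamma> * \<rho> k \<ge> \<gamma> * \<rho> K" using incseqD[OF inc k(1)] g by auto
    also have "\<gamma> * \<rho> K \<ge> \<gamma> * (\<rho> 0 * \<gamma> ^ N)" using K g by auto
    finally show ?case by (intro exI[of _ "Suc k"]) (simp add: mult.commute mult.left_commute)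
  qed
  have "filterlim \<rho> at_top sequentially"
    unfolding filterlim_at_top eventually_sequentially
  proof (intro allI)
    fix Z :: real
    obtain N where N: "Z / \<rho> 0 < \<gamma> ^ N" using real_arch_pow[OF g] by blast
    then have ZN: "Z < \<rho> 0 * \<gamma> ^ N" using r0 by (simp add: field_simps)
    obtain K where K: "\<rho> K \<ge> \<rho> 0 * \<gamma> ^ N" using grow by blast
    have "\<forall>k\<ge>K. Z \<le> \<rho> k"
    proof (intro allI impI)
      fix k assume "K \<le> k"
      then have "\<rho> K \<le> \<rho> k" using incseqD[OF inc] by blast
      then show "Z \<le> \<rho> k" using K ZN by linarith
    qed
    then show "\<exists>N. \<forall>n\<ge>N. Z \<le> \<rho> n" by blast
  qed
  then show ?thesis by blast
qed

lemma geo_null: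
  fixes V :: "nat \<Rightarrow> real"
  assumes step: "\<forall>k\<ge>K. V (Suc k) \<le> \<tau> * V k" and t: "0 < \<tau>" "\<tau> < 1" and nn: "\<forall>k. V k \<ge> 0"
  shows "V \<longlonglongrightarrow> 0"
proof -
  have b: "V (K + n) \<le> \<tau> ^ n * V K" for n
  proof (induction n)
    case 0 then show ?case by simp
  next
    case (Suc n)
    have "V (K + Suc n) \<le> \<tau> * V (K + n)" using step by simp
    also have "\<dots> \<le> \<tau> * (\<tau> ^ n * V K)" using Suc t(1) by (intro mult_left_mono) simp_all
    finally show ?case by simp
  qed
  have tK: "\<tau> ^ K > 0" using t(1) by simp
  have ev: "\<forall>\<^sub>F k in sequentially. norm (V k) \<le> (V K / \<tau> ^ K) * \<tau> ^ k"
    unfolding eventually_sequentially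
  proof (intro exI[of _ K] allI impI)
    fix k assume "K \<le> k"
    then obtain n where n: "k = K + n" using le_Suc_ex by blast
    have "V k \<le> \<tau> ^ n * V K" using b n by simp
    also have "\<tau> ^ n * V K = (V K / \<tau> ^ K) * \<tau> ^ k"
    proof -
      have "\<tau> ^ k = \<tau> ^ K * \<tau> ^ n" unfolding n by (rule power_add)
      moreover have gen: "\<And>a b v::real. a > 0 \<Longrightarrow> (v / a) * (a * b) = b * v" by (simp add: field_simps)
      ultimately show ?thesis using gen[OF tK, of "V K" "\<tau> ^ n"] by simp
    qed
    finally show "norm (V k) \<le> (V K / \<tau> ^ K) * \<tau> ^ k" using nn by simp
  qed
  have "(\<lambda>k. \<tau> ^ k) \<longlonglongrightarrow> 0" using t by (intro LIMSEQ_power_zero) simp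
  then have "(\<lambda>k. (V K / \<tau> ^ K) * \<tau> ^ k) \<longlonglongrightarrow> (V K / \<tau> ^ K) * 0"
    by (intro tendsto_mult tendsto_const)
  then have lim: "(\<lambda>k. (V K / \<tau> ^ K) * \<tau> ^ k) \<longlonglongrightarrow> 0" by simp
  show ?thesis by (rule Lim_null_comparison[OF ev lim])
qed





lemma C1_cont: "C1 f \<Longrightarrow> continuous_on UNIV f"
  unfolding C1_def
  by (intro differentiable_imp_continuous_on) (simp add: differentiable_on_def)

theorem theorem4p6:
  fixes blk :: "'n::finite \<Rightarrow> 'p::finite"
    and \<theta> :: "'p \<Rightarrow> real^'n \<Rightarrow> real"
    and g h :: "'p \<Rightarrow> real^'n \<Rightarrow> nat \<Rightarrow> real"
    and m p :: "'p \<Rightarrow> nat"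
    and xs :: "nat \<Rightarrow> real^'n"
    and lam u :: "nat \<Rightarrow> 'p \<Rightarrow> nat \<Rightarrow> real"
    and mu :: "nat \<Rightarrow> 'p \<Rightarrow> nat \<Rightarrow> real"
    and umax :: "'p \<Rightarrow> nat \<Rightarrow> real"
    and \<tau> \<gamma> :: "'p \<Rightarrow> real"
    and \<rho> :: "nat \<Rightarrow> 'p \<Rightarrow> real"
    and \<epsilon> \<epsilon>' :: "nat \<Rightarrow> real"
    and xbar :: "real^'n"
  assumes C1_theta: "\<And>\<nu>. C1 (\<theta> \<nu>)"
    and C1_g: "\<And>\<nu> i. i < m \<nu> \<Longrightarrow> C1 (\<lambda>x. g \<nu> x i)"
    and C1_h: "\<And>\<nu> i. i < p \<nu> \<Longrightarrow> C1 (\<lambda>x. h \<nu> x i)"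
    and umax_nonneg: "\<And>\<nu> i. i < m \<nu> \<Longrightarrow> umax \<nu> i \<ge> 0"
    and tau: "\<And>\<nu>. 0 < \<tau> \<nu> \<and> \<tau> \<nu> < 1"
    and gamma: "\<And>\<nu>. \<gamma> \<nu> > 1"
    and rho0: "\<And>\<nu>. \<rho> 0 \<nu> > 0"
    and inexact1: "\<And>k \<nu>. vnorm {j. blk j = \<nu>}
        (\<lambda>j. pd (\<lambda>x. La (\<theta> \<nu>) (g \<nu>) (m \<nu>) x (u k \<nu>) (\<rho> k \<nu>)) (xs (Suc k)) j
             + (\<Sum>i<p \<nu>. mu (Suc k) \<nu> i * pd (\<lambda>x. h \<nu> x i) (xs (Suc k)) j)) \<le> \<epsilon> k"
    and inexact2: "\<And>k \<nu>. vnorm {..<p \<nu>}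
        (\<lambda>i. min (- h \<nu> (xs (Suc k)) i) (mu (Suc k) \<nu> i)) \<le> \<epsilon>' k"
    and eps_nonneg: "\<And>k. \<epsilon> k \<ge> 0"
    and eps_dec: "decseq \<epsilon>"
    and eps_lim: "\<epsilon> \<longlonglongrightarrow> 0"
    and eps'_lim: "\<epsilon>' \<longlonglongrightarrow> 0"
    and lam_upd: "\<And>k \<nu> i. i < m \<nu> \<Longrightarrow>
        lam (Suc k) \<nu> i = pos (u k \<nu> i + \<rho> k \<nu> * g \<nu> (xs (Suc k)) i)"
    and rho_upd: "\<And>k \<nu>. \<rho> (Suc k) \<nu> =
        (if vnorm {..<m \<nu>} (\<lambda>i. min (- g \<nu> (xs (Suc k)) i) (lam (Suc k) \<nu> i))
            \<le> \<tau> \<nu> * vnorm {..<m \<nu>} (\<lambda>i. min (- g \<nu> (xs k) i) (lam k \<nu> i))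
         then \<rho> k \<nu> else \<gamma> \<nu> * \<rho> k \<nu>)"
    and u_upd: "\<And>k \<nu> i. i < m \<nu> \<Longrightarrow> u (Suc k) \<nu> i = min (lam (Suc k) \<nu> i) (umax \<nu> i)"
    and limpt: "\<exists>r. strict_mono r \<and> (xs \<circ> r) \<longlonglongrightarrow> xbar"
    and cq: "((\<forall>\<nu> i. i < m \<nu> + p \<nu> \<longrightarrow> cc (g \<nu>) (h \<nu>) (m \<nu>) xbar i \<le> 0) \<and>
              (\<forall>\<nu>. CPLD {j. blk j = \<nu>} (\<lambda>i x. cc (g \<nu>) (h \<nu>) (m \<nu>) x i) (m \<nu> + p \<nu>) xbar))
          \<or> (\<forall>\<nu>. \<exists>d :: 'n \<Rightarrow> real. \<forall>i < m \<nu> + p \<nu>. cc (g \<nu>) (h \<nu>) (m \<nu>) xbar i \<ge> 0 \<longrightarrow>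
                 (\<Sum>j\<in>{j. blk j = \<nu>}. pd (\<lambda>x. cc (g \<nu>) (h \<nu>) (m \<nu>) x i) xbar j * d j) < 0)"
  shows "\<exists>mult :: 'p \<Rightarrow> nat \<Rightarrow> real. \<forall>\<nu>.
           (\<forall>j. blk j = \<nu> \<longrightarrow> pd (\<theta> \<nu>) xbar j
               + (\<Sum>i < m \<nu> + p \<nu>. mult \<nu> i * pd (\<lambda>x. cc (g \<nu>) (h \<nu>) (m \<nu>) x i) xbar j) = 0)
         \<and> (\<forall>i < m \<nu> + p \<nu>. min (- cc (g \<nu>) (h \<nu>) (m \<nu>) xbar i) (mult \<nu> i) = 0)"
proof -
  have finB: "finite {j. blk j = \<nu>}" for \<nu> by simp
  from limpt obtain r where r: "strict_mono r" "(xs \<circ> r) \<longlonglongrightarrow> xbar" by blast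
  define s where "s k = r (Suc k) - 1" for k
  have sS: "Suc (s k) = r (Suc k)" for k
    using seq_suble[OF r(1), of "Suc k"] by (simp add: s_def)
  have smono: "strict_mono s"
    unfolding strict_mono_Suc_iff
  proof
    fix k
    have "r (Suc k) < r (Suc (Suc k))" using r(1) by (simp add: strict_mono_Suc_iff)
    then show "s k < s (Suc k)" using sS[of k] sS[of "Suc k"] by simp
  qed
  have sge: "k \<le> s k" for k using seq_suble[OF smono] .
  have slim: "filterlim s at_top sequentially" using filterlim_subseq[OF smono] .
  have Ssmono: "strict_mono (\<lambda>k. Suc (s k))" using smono by (simp add: strict_mono_def)
  define y where "y k = xs (Suc (s k))" for k
  have ylim: "y \<longlonglongrightarrow> xbar"
  proof -
    have "(\<lambda>k. (xs \<circ> r) (Suc k)) \<longlonglongrightarrow> xbar" using LIMSEQ_Suc[OF r(2)] .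
    then show ?thesis unfolding y_def using sS by (simp add: o_def)
  qed
  have epss: "(\<lambda>k. \<epsilon> (s k)) \<longlonglongrightarrow> 0" using LIMSEQ_subseq_LIMSEQ[OF eps_lim smono] by (simp add: o_def)
  have eps's: "(\<lambda>k. \<epsilon>' (s k)) \<longlonglongrightarrow> 0" using LIMSEQ_subseq_LIMSEQ[OF eps'_lim smono] by (simp add: o_def)
  have main: "\<forall>\<nu>. \<exists>mm :: nat \<Rightarrow> real.
           (\<forall>j. blk j = \<nu> \<longrightarrow> pd (\<theta> \<nu>) xbar j
               + (\<Sum>i < m \<nu> + p \<nu>. mm i * pd (\<lambda>x. cc (g \<nu>) (h \<nu>) (m \<nu>) x i) xbar j) = 0)
         \<and> (\<forall>i < m \<nu> + p \<nu>. min (- cc (g \<nu>) (h \<nu>) (m \<nu>) xbar i) (mm i) = 0)"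
  proof
    fix \<nu>
    show "\<exists>mm :: nat \<Rightarrow> real.
           (\<forall>j. blk j = \<nu> \<longrightarrow> pd (\<theta> \<nu>) xbar j
               + (\<Sum>i < m \<nu> + p \<nu>. mm i * pd (\<lambda>x. cc (g \<nu>) (h \<nu>) (m \<nu>) x i) xbar j) = 0)
         \<and> (\<forall>i < m \<nu> + p \<nu>. min (- cc (g \<nu>) (h \<nu>) (m \<nu>) xbar i) (mm i) = 0)"
    proof -
    define q where "q = m \<nu> + p \<nu>"
    define F where "F = (\<lambda>i x. cc (g \<nu>) (h \<nu>) (m \<nu>) x i)"
    define T where "T = \<theta> \<nu>"
    define B where "B = {j. blk j = \<nu>}"
    have Fg: "F i = (\<lambda>x. g \<nu> x i)" if "i < m \<nu>" for i
      using that by (auto simp: F_def cc_def)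
    have Fh: "F i = (\<lambda>x. h \<nu> x (i - m \<nu>))" if "\<not> i < m \<nu>" for i
      using that by (auto simp: F_def cc_def)
    have C1F: "C1 (F i)" if "i < q" for i
    proof (cases "i < m \<nu>")
      case True then show ?thesis using C1_g Fg by simp
    next
      case False then show ?thesis using C1_h[of "i - m \<nu>" \<nu>] Fh that by (simp add: q_def)
    qed
    have contF: "\<forall>i<q. \<forall>j. continuous_on UNIV (\<lambda>x. pd (F i) x j)"
      using C1F unfolding C1_def by blast
    have contT: "\<forall>j. continuous_on UNIV (\<lambda>x. pd T x j)"
      using C1_theta unfolding C1_def T_def by blast
    define \<alpha> where "\<alpha> k i = (if i < m \<nu> then lam (Suc (s k)) \<nu> i else mu (Suc (s k)) \<nu> (i - m \<nu>))" for k i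
    define P where "P k = (vnorm {..<m \<nu>} (\<lambda>i. min (- g \<nu> (xs (Suc k)) i) (lam (Suc k) \<nu> i))
            \<le> \<tau> \<nu> * vnorm {..<m \<nu>} (\<lambda>i. min (- g \<nu> (xs k) i) (lam k \<nu> i)))" for k
    have rupd: "\<forall>k. \<rho> (Suc k) \<nu> = (if P k then \<rho> k \<nu> else \<gamma> \<nu> * \<rho> k \<nu>)"
      using rho_upd unfolding P_def by blast
    have rpos: "\<rho> k \<nu> > 0" for k
      using rho_pos[of "\<lambda>k. \<rho> k \<nu>", OF rupd gamma rho0] .
    have res: "\<forall>j\<in>B. (\<lambda>k. pd T (y k) j + (\<Sum>i<q. \<alpha> k i * pd (F i) (y k) j)) \<longlonglongrightarrow> 0"
    proof
      fix j assume j: "j \<in> B"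
      have bound: "norm (pd T (y k) j + (\<Sum>i<q. \<alpha> k i * pd (F i) (y k) j)) \<le> \<epsilon> (s k)" for k
      proof -
        define K where "K = s k"
        have eq1: "pd (\<lambda>x. La (\<theta> \<nu>) (g \<nu>) (m \<nu>) x (u K \<nu>) (\<rho> K \<nu>)) (xs (Suc K)) j
           = pd (\<theta> \<nu>) (xs (Suc K)) j + (\<Sum>i<m \<nu>. lam (Suc K) \<nu> i * pd (\<lambda>x. g \<nu> x i) (xs (Suc K)) j)"
        proof -
          have "pd (\<lambda>x. La (\<theta> \<nu>) (g \<nu>) (m \<nu>) x (u K \<nu>) (\<rho> K \<nu>)) (xs (Suc K)) j
             = pd (\<theta> \<nu>) (xs (Suc K)) j + (\<Sum>i<m \<nu>. pos (u K \<nu> i + \<rho> K \<nu> * g \<nu> (xs (Suc K)) i) * pd (\<lambda>x. g \<nu> x i) (xs (Suc K)) j)"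
            by (rule pd_La[OF C1_theta C1_g rpos])
          also have "(\<Sum>i<m \<nu>. pos (u K \<nu> i + \<rho> K \<nu> * g \<nu> (xs (Suc K)) i) * pd (\<lambda>x. g \<nu> x i) (xs (Suc K)) j)
              = (\<Sum>i<m \<nu>. lam (Suc K) \<nu> i * pd (\<lambda>x. g \<nu> x i) (xs (Suc K)) j)"
            by (rule sum.cong) (simp_all add: lam_upd)
          finally show ?thesis .
        qed
        have eq2: "(\<Sum>i<q. \<alpha> k i * pd (F i) (y k) j)
           = (\<Sum>i<m \<nu>. lam (Suc K) \<nu> i * pd (\<lambda>x. g \<nu> x i) (xs (Suc K)) j)
             + (\<Sum>i<p \<nu>. mu (Suc K) \<nu> i * pd (\<lambda>x. h \<nu> x i) (xs (Suc K)) j)"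
        proof -
          have "(\<Sum>i<q. \<alpha> k i * pd (F i) (y k) j) = (\<Sum>i<m \<nu>. \<alpha> k i * pd (F i) (y k) j)
              + (\<Sum>i<p \<nu>. \<alpha> k (m \<nu> + i) * pd (F (m \<nu> + i)) (y k) j)"
            unfolding q_def by (rule sum_split)
          also have "(\<Sum>i<m \<nu>. \<alpha> k i * pd (F i) (y k) j) = (\<Sum>i<m \<nu>. lam (Suc K) \<nu> i * pd (\<lambda>x. g \<nu> x i) (xs (Suc K)) j)"
            by (rule sum.cong) (simp_all add: \<alpha>_def Fg y_def K_def)
          also have "(\<Sum>i<p \<nu>. \<alpha> k (m \<nu> + i) * pd (F (m \<nu> + i)) (y k) j) = (\<Sum>i<p \<nu>. mu (Suc K) \<nu> i * pd (\<lambda>x. h \<nu> x i) (xs (Suc K)) j)"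
            by (rule sum.cong) (simp_all add: \<alpha>_def Fh y_def K_def)
          finally show ?thesis .
        qed
        have "norm (pd T (y k) j + (\<Sum>i<q. \<alpha> k i * pd (F i) (y k) j))
          = \<bar>pd (\<lambda>x. La (\<theta> \<nu>) (g \<nu>) (m \<nu>) x (u K \<nu>) (\<rho> K \<nu>)) (xs (Suc K)) j
             + (\<Sum>i<p \<nu>. mu (Suc K) \<nu> i * pd (\<lambda>x. h \<nu> x i) (xs (Suc K)) j)\<bar>"
          unfolding eq1 eq2 by (simp add: T_def y_def K_def add.assoc)
        also have "\<dots> \<le> vnorm {j. blk j = \<nu>}
          (\<lambda>j. pd (\<lambda>x. La (\<theta> \<nu>) (g \<nu>) (m \<nu>) x (u K \<nu>) (\<rho> K \<nu>)) (xs (Suc K)) j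
             + (\<Sum>i<p \<nu>. mu (Suc K) \<nu> i * pd (\<lambda>x. h \<nu> x i) (xs (Suc K)) j))"
          using j unfolding B_def by (intro vnorm_ge[OF finB]) auto
        also have "\<dots> \<le> \<epsilon> K" by (rule inexact1)
        finally show ?thesis by (simp add: K_def)
      qed
      show "(\<lambda>k. pd T (y k) j + (\<Sum>i<q. \<alpha> k i * pd (F i) (y k) j)) \<longlonglongrightarrow> 0"
        by (rule Lim_null_comparison[OF always_eventually[OF allI[OF bound]] epss])
    qed
    have hmin: "(\<lambda>k. min (- h \<nu> (y k) i) (mu (Suc (s k)) \<nu> i)) \<longlonglongrightarrow> 0" if i: "i < p \<nu>" for i
    proof -
      have "norm (min (- h \<nu> (y k) i) (mu (Suc (s k)) \<nu> i)) \<le> \<epsilon>' (s k)" for k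
      proof -
        have "norm (min (- h \<nu> (y k) i) (mu (Suc (s k)) \<nu> i))
          \<le> vnorm {..<p \<nu>} (\<lambda>i. min (- h \<nu> (xs (Suc (s k))) i) (mu (Suc (s k)) \<nu> i))"
          using i vnorm_ge[of "{..<p \<nu>}" i "\<lambda>i. min (- h \<nu> (xs (Suc (s k))) i) (mu (Suc (s k)) \<nu> i)"]
          by (simp add: y_def)
        also have "\<dots> \<le> \<epsilon>' (s k)" by (rule inexact2)
        finally show ?thesis .
      qed
      then show ?thesis by (rule Lim_null_comparison[OF always_eventually[OF allI] eps's])
    qed
    have gy: "(\<lambda>k. g \<nu> (y k) i) \<longlonglongrightarrow> g \<nu> xbar i" if "i < m \<nu>" for i
      using C1_cont[OF C1_g[OF that]] by (rule cont_compose_seq[OF _ ylim])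
    have hy: "(\<lambda>k. h \<nu> (y k) i) \<longlonglongrightarrow> h \<nu> xbar i" if "i < p \<nu>" for i
      using C1_cont[OF C1_h[OF that]] by (rule cont_compose_seq[OF _ ylim])
    have hfeas: "h \<nu> xbar i \<le> 0" if i: "i < p \<nu>" for i
    proof -
      have "- h \<nu> xbar i \<ge> 0"
        by (rule min_feas[OF hmin[OF i]]) (intro tendsto_intros hy i)
      then show ?thesis by simp
    qed
    have H1h: "(\<lambda>k. mu (Suc (s k)) \<nu> i) \<longlonglongrightarrow> 0" if i: "i < p \<nu>" and neg: "h \<nu> xbar i < 0" for i
      by (rule min_lim[OF hmin[OF i] _ ]) (use neg in \<open>auto intro!: tendsto_intros hy i\<close>)
    have lam_nn: "lam (Suc k) \<nu> i \<ge> 0" if "i < m \<nu>" for k i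
      using lam_upd[OF that] by (simp add: pos_def)
    have H2: "\<forall>i<q. (\<lambda>k. min 0 (\<alpha> k i)) \<longlonglongrightarrow> 0"
    proof (intro allI impI)
      fix i assume i: "i < q"
      show "(\<lambda>k. min 0 (\<alpha> k i)) \<longlonglongrightarrow> 0"
      proof (cases "i < m \<nu>")
        case True
        then have "min 0 (\<alpha> k i) = 0" for k using lam_nn[OF True] by (simp add: \<alpha>_def)
        then show ?thesis by simp
      next
        case False
        then have i': "i - m \<nu> < p \<nu>" using i by (simp add: q_def)
        have "norm (min 0 (\<alpha> k i)) \<le> norm (min (- h \<nu> (y k) (i - m \<nu>)) (mu (Suc (s k)) \<nu> (i - m \<nu>)))" for k
          using False abs_min0 by (simp add: \<alpha>_def)
        then have "\<forall>\<^sub>F k in sequentially. norm (min 0 (\<alpha> k i)) \<le> norm (min (- h \<nu> (y k) (i - m \<nu>)) (mu (Suc (s k)) \<nu> (i - m \<nu>)))"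
          by simp
        moreover have "(\<lambda>k. norm (min (- h \<nu> (y k) (i - m \<nu>)) (mu (Suc (s k)) \<nu> (i - m \<nu>)))) \<longlonglongrightarrow> 0"
          using tendsto_norm_zero[OF hmin[OF i']] .
        ultimately show ?thesis by (rule Lim_null_comparison)
      qed
    qed
    have ubnd: "0 \<le> u K \<nu> i \<and> u K \<nu> i \<le> umax \<nu> i" if "K \<ge> 1" "i < m \<nu>" for K i
    proof -
      define K' where "K' = K - 1"
      have K': "K = Suc K'" using that(1) unfolding K'_def by simp
      have e: "u K \<nu> i = min (lam (Suc K') \<nu> i) (umax \<nu> i)" unfolding K' by (rule u_upd[OF that(2)])
      show ?thesis unfolding e using lam_nn[OF that(2), of K'] umax_nonneg[OF that(2)] by (auto simp: min_def)
    qed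
    have \<alpha>g: "\<alpha> k i = lam (Suc (s k)) \<nu> i" if "i < m \<nu>" for k i using that by (simp add: \<alpha>_def)
    have gfacts: "\<forall>i<m \<nu>. (g \<nu> xbar i < 0 \<longrightarrow> (\<lambda>k. \<alpha> k i) \<longlonglongrightarrow> 0) \<and>
        (g \<nu> xbar i \<le> 0 \<or> filterlim (\<lambda>k. \<alpha> k i) at_top sequentially)"
    proof -
      from rho_dichotomy[of "\<lambda>k. \<rho> k \<nu>" P "\<gamma> \<nu>", OF rupd gamma rho0]
      show ?thesis
      proof
        assume "\<exists>K. \<forall>k\<ge>K. P k"
        then obtain K where K: "\<forall>k\<ge>K. P k" by blast
        define V where "V k = vnorm {..<m \<nu>} (\<lambda>i. min (- g \<nu> (xs k) i) (lam k \<nu> i))" for k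
        have Vnn: "\<forall>k. V k \<ge> 0" unfolding V_def vnorm_def by (simp add: sum_nonneg)
        have Vstep: "\<forall>k\<ge>K. V (Suc k) \<le> \<tau> \<nu> * V k" using K unfolding P_def V_def by blast
        have Vlim: "V \<longlonglongrightarrow> 0"
          using geo_null[OF Vstep _ _ Vnn] tau by blast
        have gm: "(\<lambda>k. min (- g \<nu> (y k) i) (lam (Suc (s k)) \<nu> i)) \<longlonglongrightarrow> 0" if i: "i < m \<nu>" for i
        proof -
          have "norm (min (- g \<nu> (xs k) i) (lam k \<nu> i)) \<le> V k" for k
            unfolding V_def using vnorm_ge[of "{..<m \<nu>}" i "\<lambda>i. min (- g \<nu> (xs k) i) (lam k \<nu> i)"] i by simp
          then have "(\<lambda>k. min (- g \<nu> (xs k) i) (lam k \<nu> i)) \<longlonglongrightarrow> 0"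
            by (intro Lim_null_comparison[OF always_eventually Vlim]) blast
          from LIMSEQ_subseq_LIMSEQ[OF this Ssmono] show ?thesis by (simp add: o_def y_def)
        qed
        show ?thesis
        proof (intro allI impI conjI)
          fix i assume i: "i < m \<nu>"
          have mg: "(\<lambda>k. - g \<nu> (y k) i) \<longlonglongrightarrow> - g \<nu> xbar i" by (intro tendsto_intros gy i)
          {
            assume "g \<nu> xbar i < 0"
            then have "(\<lambda>k. lam (Suc (s k)) \<nu> i) \<longlonglongrightarrow> 0" using min_lim[OF gm[OF i] mg] by simp
            then show "(\<lambda>k. \<alpha> k i) \<longlonglongrightarrow> 0" using \<alpha>g[OF i] by simp
          }
          have "- g \<nu> xbar i \<ge> 0" by (rule min_feas[OF gm[OF i] mg])
          then show "g \<nu> xbar i \<le> 0 \<or> filterlim (\<lambda>k. \<alpha> k i) at_top sequentially" by simp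
        qed
      next
        assume rinf: "filterlim (\<lambda>k. \<rho> k \<nu>) at_top sequentially"
        have rs: "filterlim (\<lambda>k. \<rho> (s k) \<nu>) at_top sequentially"
          using filterlim_compose[OF rinf slim] .
        show ?thesis
        proof (intro allI impI conjI)
          fix i assume i: "i < m \<nu>"
          {
            assume neg: "g \<nu> xbar i < 0"
            define c where "c = - g \<nu> xbar i / 2"
            have c: "c > 0" using neg by (simp add: c_def)
            have e1: "\<forall>\<^sub>F k in sequentially. g \<nu> (y k) i < - c"
              using gy[OF i] neg by (intro order_tendstoD(2)) (auto simp: c_def)
            have e2: "\<forall>\<^sub>F k in sequentially. umax \<nu> i / c < \<rho> (s k) \<nu>"
              using rs by (simp add: filterlim_at_top_dense)
            have e3: "\<forall>\<^sub>F k in sequentially. k \<ge> 1" by (rule eventually_ge_at_top)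
            have "\<forall>\<^sub>F k in sequentially. \<alpha> k i = 0"
              using e1 e2 e3
            proof eventually_elim
              case (elim k)
              have ub: "u (s k) \<nu> i \<le> umax \<nu> i" using ubnd[of "s k" i] sge[of k] elim(3) i by simp
              have "\<rho> (s k) \<nu> * g \<nu> (y k) i \<le> \<rho> (s k) \<nu> * (- c)"
                using elim(1) rpos[of "s k"] by (intro mult_left_mono) auto
              moreover have "umax \<nu> i < \<rho> (s k) \<nu> * c" using elim(2) c by (simp add: field_simps)
              ultimately have "u (s k) \<nu> i + \<rho> (s k) \<nu> * g \<nu> (xs (Suc (s k))) i \<le> 0"
                using ub unfolding y_def by linarith
              then show ?case using \<alpha>g[OF i] lam_upd[OF i, of "s k"] by (simp add: pos_def)
            qed
            then show "(\<lambda>k. \<alpha> k i) \<longlonglongrightarrow> 0" by (rule tendsto_eventually)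
          }
          show "g \<nu> xbar i \<le> 0 \<or> filterlim (\<lambda>k. \<alpha> k i) at_top sequentially"
          proof (cases "g \<nu> xbar i \<le> 0")
            case False
            have "filterlim (\<lambda>k. g \<nu> (y k) i * \<rho> (s k) \<nu>) at_top sequentially"
              using False by (intro filterlim_tendsto_pos_mult_at_top[OF gy[OF i] _ rs]) simp
            moreover have "\<forall>\<^sub>F k in sequentially. g \<nu> (y k) i * \<rho> (s k) \<nu> \<le> \<alpha> k i"
              using eventually_ge_at_top[of 1]
            proof eventually_elim
              case (elim k)
              have "0 \<le> u (s k) \<nu> i" using ubnd[of "s k" i] sge[of k] elim i by simp
              then have "g \<nu> (y k) i * \<rho> (s k) \<nu> \<le> u (s k) \<nu> i + \<rho> (s k) \<nu> * g \<nu> (xs (Suc (s k))) i"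
                by (simp add: y_def mult.commute)
              also have "\<dots> \<le> pos (u (s k) \<nu> i + \<rho> (s k) \<nu> * g \<nu> (xs (Suc (s k))) i)"
                by (simp add: pos_def)
              finally show ?case using \<alpha>g[OF i] lam_upd[OF i, of "s k"] by simp
            qed
            ultimately have "filterlim (\<lambda>k. \<alpha> k i) at_top sequentially" by (rule filterlim_at_top_mono)
            then show ?thesis by simp
          qed simp
        qed
      qed
    qed
    have H1: "\<forall>i<q. F i xbar < 0 \<longrightarrow> (\<lambda>k. \<alpha> k i) \<longlonglongrightarrow> 0"
    proof (intro allI impI)
      fix i assume i: "i < q" and neg: "F i xbar < 0"
      show "(\<lambda>k. \<alpha> k i) \<longlonglongrightarrow> 0"
      proof (cases "i < m \<nu>")
        case True
        then show ?thesis using gfacts neg Fg[OF True] by simp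
      next
        case False
        then have i': "i - m \<nu> < p \<nu>" using i by (simp add: q_def)
        have "h \<nu> xbar (i - m \<nu>) < 0" using neg Fh[OF False] by simp
        from H1h[OF i' this] show ?thesis using False by (simp add: \<alpha>_def)
      qed
    qed
    have feas_cpld: "(\<forall>i<q. F i xbar \<le> 0) \<and> CPLD B F q xbar"
      using cq
    proof
      assume a: "(\<forall>\<nu> i. i < m \<nu> + p \<nu> \<longrightarrow> cc (g \<nu>) (h \<nu>) (m \<nu>) xbar i \<le> 0) \<and>
              (\<forall>\<nu>. CPLD {j. blk j = \<nu>} (\<lambda>i x. cc (g \<nu>) (h \<nu>) (m \<nu>) x i) (m \<nu> + p \<nu>) xbar)"
      then show ?thesis unfolding F_def B_def q_def by blast
    next
      assume b: "\<forall>\<nu>. \<exists>d :: 'n \<Rightarrow> real. \<forall>i < m \<nu> + p \<nu>. cc (g \<nu>) (h \<nu>) (m \<nu>) xbar i \<ge> 0 \<longrightarrow>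
                 (\<Sum>j\<in>{j. blk j = \<nu>}. pd (\<lambda>x. cc (g \<nu>) (h \<nu>) (m \<nu>) x i) xbar j * d j) < 0"
      then obtain d :: "'n \<Rightarrow> real" where d: "\<forall>i<q. F i xbar \<ge> 0 \<longrightarrow> (\<Sum>j\<in>B. pd (F i) xbar j * d j) < 0"
        unfolding F_def B_def q_def by blast
      have feas: "\<forall>i<q. F i xbar \<le> 0"
      proof (intro allI impI)
        fix i assume i: "i < q"
        show "F i xbar \<le> 0"
        proof (cases "i < m \<nu>")
          case True
          show ?thesis
          proof (rule ccontr)
            assume nf: "\<not> F i xbar \<le> 0"
            then have "\<not> g \<nu> xbar i \<le> 0" using Fg[OF True] by simp
            then have big: "filterlim (\<lambda>k. \<alpha> k i) at_top sequentially" using gfacts True by blast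
            show False
              by (rule emf_contra[OF contT contF ylim res H1 H2 d i _ big]) (use nf in simp)
          qed
        next
          case False
          then have i': "i - m \<nu> < p \<nu>" using i by (simp add: q_def)
          show ?thesis using hfeas[OF i'] Fh[OF False] by simp
        qed
      qed
      moreover have "CPLD B F q xbar" by (rule emfcq_cpld[OF d])
      ultimately show ?thesis by blast
    qed
    have APX: "\<forall>e>0. APX T F B xbar {i. i < q \<and> F i xbar = 0} e"
      using seq_APX[OF contT contF ylim res H1 H2] feas_cpld by blast
    from core[OF contT contF _ _ subset_refl APX] feas_cpld
    obtain mm where mm: "\<forall>j\<in>B. pd T xbar j + (\<Sum>i<q. mm i * pd (F i) xbar j) = 0"
        "\<forall>i<q. min (- F i xbar) (mm i) = 0"
      by blast
    show ?thesis
      using mm unfolding T_def F_def B_def q_def by (intro exI[of _ mm]) auto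
    qed
  qed
  show ?thesis using choice[OF main] by blast
qed


end
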